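(* Let $K$ be a commutative domain, $n\in\mathbb{N}_*$, $B$ a polynomial $K$-algebra in $n$ indeterminates, and $A$ the $K$-subalgebra of $B$ generated by $n$ elements $F_1,\dots,F_n\in B$ that are algebraically independent over $K$. Then the separable degree $[B_*^{-1}B:A_*^{-1}A]_s$ of the field extension $A_*^{-1}A\subset B_*^{-1}B$ is at most $\prod_{1\le i\le n}\deg F_i$.
   Context: For a domain $R$, $R_*=R\setminus\{0\}$ and $R_*^{-1}R$ denotes its field of fractions; $\mathbb{N}_*=\mathbb{N}\setminus\{0\}$. $[L:M]_s$ denotes the separable degree of a field extension $M\subset L$. *)

theory Defs
  imports "HOL-Library.Poly_Mapping" "HOL-Library.Extended_Nat"
    "HOL-Computational_Algebra.Polynomial" "HOL-Computational_Algebra.Fraction_Field"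
begin

text \<open>Polynomials over a coefficient ring 'a in the indeterminates indexed by a finite
  type 'v (so n = CARD('v) \<ge> 1) are represented as finitely supported maps from exponent vectors to 'a
  (monomial exponent vector \<mapsto> coefficient).\<close>

type_synonym ('v, 'a) mpoly = "('v \<Rightarrow>\<^sub>0 nat) \<Rightarrow>\<^sub>0 'a"

definition mconst :: "'a::zero \<Rightarrow> ('v, 'a) mpoly" where
  "mconst c = Poly_Mapping.single 0 c"

text \<open>Total degree (degree of the zero polynomial set to 0).\<close>
definition mpoly_deg :: "('v::finite, 'a::zero) mpoly \<Rightarrow> nat" where
  "mpoly_deg p = (if p = 0 then 0 else Max ((\<lambda>m. \<Sum>v\<in>UNIV. Poly_Mapping.lookup m v) ` Poly_Mapping.keys p))"

definition mpoly_eval :: "('a::zero \<Rightarrow> 'r::comm_ring_1) \<Rightarrow> ('w::finite, 'a) mpoly \<Rightarrow> ('w \<Rightarrow> 'r) \<Rightarrow> 'r" where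
  "mpoly_eval \<phi> P F = (\<Sum>m\<in>Poly_Mapping.keys P. \<phi> (Poly_Mapping.lookup P m) * (\<Prod>w\<in>UNIV. F w ^ Poly_Mapping.lookup m w))"

definition alg_indep :: "('v::finite \<Rightarrow> ('u, 'a::comm_ring_1) mpoly) \<Rightarrow> bool" where
  "alg_indep F \<longleftrightarrow> (\<forall>P :: ('v, 'a) mpoly. mpoly_eval mconst P F = 0 \<longrightarrow> P = 0)"

definition gen_subalg :: "('v::finite \<Rightarrow> ('u, 'a::comm_ring_1) mpoly) \<Rightarrow> ('u, 'a) mpoly set" where
  "gen_subalg F = range (\<lambda>P :: ('v, 'a) mpoly. mpoly_eval mconst P F)"

definition frac_of :: "'r::idom set \<Rightarrow> 'r fract set" where
  "frac_of S = {Fract a b | a b. a \<in> S \<and> b \<in> S \<and> b \<noteq> 0}"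

text \<open>x is separable (algebraic) over the subfield M: x is a root of a nonzero polynomial with
  coefficients in M which is separable, i.e. coprime to its derivative in M[X].\<close>
definition poly_over :: "'f::field set \<Rightarrow> 'f poly \<Rightarrow> bool" where
  "poly_over M p \<longleftrightarrow> set (coeffs p) \<subseteq> M"

definition separable_over :: "'f::field set \<Rightarrow> 'f \<Rightarrow> bool" where
  "separable_over M x \<longleftrightarrow> (\<exists>p. poly_over M p \<and> p \<noteq> 0 \<and> poly p x = 0 \<and>
      (\<exists>u v. poly_over M u \<and> poly_over M v \<and> u * p + v * pderiv p = 1))"

definition sep_closure :: "'f::field set \<Rightarrow> 'f set \<Rightarrow> 'f set" where
  "sep_closure M L = {x \<in> L. separable_over M x}"

definition span_over :: "'f::field set \<Rightarrow> 'f set \<Rightarrow> 'f set" where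
  "span_over M b = {\<Sum>y\<in>b. c y * y | c. \<forall>y\<in>b. c y \<in> M}"

text \<open>Dimension of S as a vector space over the subfield M (infinity if not finite):
  minimal cardinality of a finite M-spanning subset of S.\<close>
definition ext_degree :: "'f::field set \<Rightarrow> 'f set \<Rightarrow> enat" where
  "ext_degree M S = (INF b\<in>{b. b \<subseteq> S \<and> finite b \<and> S \<subseteq> span_over M b}. enat (card b))"

text \<open>Separable degree [L:M]_s = [L_s:M], L_s the separable closure of M in L.\<close>
definition sep_degree :: "'f::field set \<Rightarrow> 'f set \<Rightarrow> enat" where
  "sep_degree M L = ext_degree M (sep_closure M L)"

end

theory Submission
  imports Defs "HOL-Library.FuncSet"
begin


lemma lookup_map0: "f 0 = 0 \<Longrightarrow> Poly_Mapping.lookup (Poly_Mapping.map f p) k = f (Poly_Mapping.lookup p k)"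
  by transfer (simp add: when_def)

lemma lookup_single0_mult:
  "Poly_Mapping.lookup (Poly_Mapping.single 0 c * p) k = (c::'b::comm_semiring_1) * Poly_Mapping.lookup p k"
  by (simp add: mult_map_scale_conv_mult[symmetric] lookup_map0)

lemma poly_expand: "p = (\<Sum>a\<in>Poly_Mapping.keys p. Poly_Mapping.single a (Poly_Mapping.lookup p a))"
proof (rule poly_mapping_eqI)
  fix k
  show "Poly_Mapping.lookup p k = Poly_Mapping.lookup (\<Sum>a\<in>Poly_Mapping.keys p. Poly_Mapping.single a (Poly_Mapping.lookup p a)) k"
    by (simp add: lookup_sum lookup_single when_def in_keys_iff)
qed

definition mdeg :: "('v::finite \<Rightarrow>\<^sub>0 nat) \<Rightarrow> nat" where
  "mdeg a = (\<Sum>v\<in>UNIV. Poly_Mapping.lookup a v)"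

definition degle :: "('v::finite, 'a::zero) mpoly \<Rightarrow> nat \<Rightarrow> bool" where
  "degle p D \<longleftrightarrow> (\<forall>a\<in>Poly_Mapping.keys p. mdeg a \<le> D)"

definition Fpow :: "('w::finite \<Rightarrow> 'r::comm_ring_1) \<Rightarrow> ('w \<Rightarrow>\<^sub>0 nat) \<Rightarrow> 'r" where
  "Fpow F m = (\<Prod>w\<in>UNIV. F w ^ Poly_Mapping.lookup m w)"

lemma mdeg_add: "mdeg (a + b) = mdeg a + mdeg b"
  by (simp add: mdeg_def lookup_add sum.distrib)

lemma mdeg_zero[simp]: "mdeg 0 = 0"
  by (simp add: mdeg_def)

lemma degle_mono: "degle p a \<Longrightarrow> a \<le> b \<Longrightarrow> degle p b"
  unfolding degle_def by fastforce

lemma degle_mult: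
  fixes p q :: "('v::finite, 'a::comm_semiring_1) mpoly"
  assumes "degle p a" "degle q b" shows "degle (p * q) (a + b)"
  unfolding degle_def
proof
  fix m assume "m \<in> Poly_Mapping.keys (p * q)"
  then obtain x y where "m = x + y" "x \<in> Poly_Mapping.keys p" "y \<in> Poly_Mapping.keys q"
    using keys_mult by blast
  then show "mdeg m \<le> a + b" using assms by (auto simp: degle_def mdeg_add intro: add_mono)
qed

lemma degle_one: "degle (1::('v::finite, 'a::comm_semiring_1) mpoly) 0"
  by (simp add: degle_def)

lemma degle_pow:
  fixes p :: "('v::finite, 'a::comm_semiring_1) mpoly"
  assumes "degle p a" shows "degle (p ^ k) (k * a)"
proof (induction k)
  case 0 then show ?case by (simp add: degle_one)
next
  case (Suc k)
  then show ?case using degle_mult[OF assms Suc] by (simp add: add.commute)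
qed

lemma degle_prod:
  fixes f :: "'i \<Rightarrow> ('v::finite, 'a::comm_semiring_1) mpoly"
  assumes "\<And>i. i \<in> I \<Longrightarrow> degle (f i) (a i)" shows "degle (\<Prod>i\<in>I. f i) (\<Sum>i\<in>I. a i)"
  using assms
proof (induction I rule: infinite_finite_induct)
  case (infinite A) then show ?case by (simp add: degle_one)
next
  case empty then show ?case by (simp add: degle_one)
next
  case (insert x F) then show ?case by (simp add: degle_mult)
qed

lemma degle_deg: "degle p (mpoly_deg p)"
  unfolding degle_def mpoly_deg_def mdeg_def
  by (auto intro!: Max_ge)

lemma degle_Fpow:
  fixes F :: "'w::finite \<Rightarrow> ('v::finite, 'a::comm_ring_1) mpoly" 
  shows "degle (Fpow F m) (\<Sum>w\<in>UNIV. Poly_Mapping.lookup m w * mpoly_deg (F w))"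
  unfolding Fpow_def
  by (rule degle_prod) (simp add: degle_pow degle_deg)

lemma mconst_mult: "mconst a * mconst b = mconst (a * b)"
  by (simp add: mconst_def mult_single)

lemma mconst_add: "mconst a + mconst b = mconst (a + b)"
  by (simp add: mconst_def single_add)

lemma mconst_0[simp]: "mconst 0 = 0"
  by (simp add: mconst_def)

lemma mconst_1[simp]: "mconst 1 = 1"
  by (simp add: mconst_def)

lemma Fpow_add: "Fpow F (a + b) = Fpow F a * Fpow F b"
  by (simp add: Fpow_def lookup_add power_add prod.distrib)

lemma Fpow_0[simp]: "Fpow F 0 = 1"
  by (simp add: Fpow_def)

lemma eval_superset:
  fixes F :: "'w::finite \<Rightarrow> ('v, 'a::comm_ring_1) mpoly"
  assumes "finite S" "Poly_Mapping.keys P \<subseteq> S"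
  shows "mpoly_eval mconst P F = (\<Sum>m\<in>S. mconst (Poly_Mapping.lookup P m) * Fpow F m)"
  unfolding mpoly_eval_def Fpow_def
  by (rule sum.mono_neutral_left) (use assms in \<open>auto simp: in_keys_iff\<close>)

lemma eval_add:
  fixes F :: "'w::finite \<Rightarrow> ('v, 'a::comm_ring_1) mpoly"
  shows "mpoly_eval mconst (P + Q) F = mpoly_eval mconst P F + mpoly_eval mconst Q F"
proof -
  let ?S = "Poly_Mapping.keys P \<union> Poly_Mapping.keys Q"
  have fin: "finite ?S" by simp
  have "Poly_Mapping.keys (P + Q) \<subseteq> ?S" by (rule keys_add)
  then have "mpoly_eval mconst (P + Q) F = (\<Sum>m\<in>?S. mconst (Poly_Mapping.lookup (P+Q) m) * Fpow F m)"
    by (rule eval_superset[OF fin])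
  also have "\<dots> = (\<Sum>m\<in>?S. mconst (Poly_Mapping.lookup P m) * Fpow F m) + (\<Sum>m\<in>?S. mconst (Poly_Mapping.lookup Q m) * Fpow F m)"
    by (simp add: lookup_add mconst_add[symmetric] distrib_right sum.distrib)
  also have "\<dots> = mpoly_eval mconst P F + mpoly_eval mconst Q F"
    by (simp add: eval_superset[OF fin])
  finally show ?thesis .
qed

lemma eval_zero[simp]: "mpoly_eval mconst 0 F = 0"
  by (simp add: mpoly_eval_def)

lemma eval_sum:
  fixes F :: "'w::finite \<Rightarrow> ('v, 'a::comm_ring_1) mpoly"
  shows "mpoly_eval mconst (sum f S) F = (\<Sum>i\<in>S. mpoly_eval mconst (f i) F)"
  by (induction S rule: infinite_finite_induct) (simp_all add: eval_add)

lemma eval_single: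
  fixes F :: "'w::finite \<Rightarrow> ('v, 'a::comm_ring_1) mpoly"
  shows "mpoly_eval mconst (Poly_Mapping.single m c) F = mconst c * Fpow F m"
  by (subst eval_superset[of "{m}"]) auto

lemma eval_mult:
  fixes F :: "'w::finite \<Rightarrow> ('v, 'a::comm_ring_1) mpoly"
  shows "mpoly_eval mconst (P * Q) F = mpoly_eval mconst P F * mpoly_eval mconst Q F"
proof -
  let ?P = "\<lambda>a. Poly_Mapping.lookup P a" and ?Q = "\<lambda>a. Poly_Mapping.lookup Q a"
  have "P * Q = (\<Sum>a\<in>Poly_Mapping.keys P. Poly_Mapping.single a (?P a)) * (\<Sum>b\<in>Poly_Mapping.keys Q. Poly_Mapping.single b (?Q b))"
    by (simp flip: poly_expand)
  also have "\<dots> = (\<Sum>a\<in>Poly_Mapping.keys P. \<Sum>b\<in>Poly_Mapping.keys Q. Poly_Mapping.single (a + b) (?P a * ?Q b))"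
    by (simp add: sum_product mult_single)
  finally have "mpoly_eval mconst (P * Q) F = (\<Sum>a\<in>Poly_Mapping.keys P. \<Sum>b\<in>Poly_Mapping.keys Q. mconst (?P a) * Fpow F a * (mconst (?Q b) * Fpow F b))"
    by (simp add: eval_sum eval_single Fpow_add mconst_mult[symmetric] mult_ac)
  also have "\<dots> = mpoly_eval mconst P F * mpoly_eval mconst Q F"
    by (simp add: mpoly_eval_def Fpow_def sum_product)
  finally show ?thesis .
qed

lemma eval_one[simp]:
  fixes F :: "'w::finite \<Rightarrow> ('v, 'a::comm_ring_1) mpoly"
  shows "mpoly_eval mconst 1 F = 1"
  using eval_single[of 0 1 F] by (simp add: mconst_def)

lemma eval_uminus:
  fixes F :: "'w::finite \<Rightarrow> ('v, 'a::comm_ring_1) mpoly"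
  shows "mpoly_eval mconst (- P) F = - mpoly_eval mconst P F"
  using eval_add[of "-P" P F] by (simp add: eq_neg_iff_add_eq_0)

lemma eval_sum_singles:
  fixes F :: "'w::finite \<Rightarrow> ('v, 'a::comm_ring_1) mpoly"
  shows "mpoly_eval mconst (\<Sum>b\<in>J. Poly_Mapping.single b (u b)) F = (\<Sum>b\<in>J. mconst (u b) * Fpow F b)"
  by (simp add: eval_sum eval_single)

lemma lookup_sum_singles:
  "finite J \<Longrightarrow> Poly_Mapping.lookup (\<Sum>b\<in>J. Poly_Mapping.single b (u b)) m = (if m \<in> J then u m else 0)"
  by (simp add: lookup_sum lookup_single when_def)



definition sc :: "'f::field \<Rightarrow> ('m::comm_monoid_add \<Rightarrow>\<^sub>0 'f) \<Rightarrow> ('m \<Rightarrow>\<^sub>0 'f)" where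
  "sc c p = Poly_Mapping.single 0 c * p"

lemma vs_sc: "vector_space (sc :: 'f::field \<Rightarrow> ('m::comm_monoid_add \<Rightarrow>\<^sub>0 'f) \<Rightarrow> ('m \<Rightarrow>\<^sub>0 'f))"
  by unfold_locales (simp_all add: sc_def distrib_left distrib_right single_add mult.assoc[symmetric] mult_single)

interpretation vs: vector_space "sc :: 'f::field \<Rightarrow> ('m::comm_monoid_add \<Rightarrow>\<^sub>0 'f) \<Rightarrow> ('m \<Rightarrow>\<^sub>0 'f)"
  by (rule vs_sc)

lemma Fract1_eq0[simp]: "Fract (x::'a::idom) 1 = 0 \<longleftrightarrow> x = 0"
  by (simp add: Zero_fract_def eq_fract)

definition emb :: "('m \<Rightarrow>\<^sub>0 'a::idom) \<Rightarrow> ('m \<Rightarrow>\<^sub>0 'a fract)" where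
  "emb p = Poly_Mapping.map (\<lambda>k. Fract k 1) p"

lemma lookup_emb: "Poly_Mapping.lookup (emb p) m = Fract (Poly_Mapping.lookup p m) 1"
  unfolding emb_def by (rule lookup_map0) (simp add: fract_collapse)

lemma emb_add: "emb (p + q) = emb p + emb q"
  by (rule poly_mapping_eqI) (simp add: lookup_emb lookup_add)

lemma emb_0[simp]: "emb 0 = 0"
  by (rule poly_mapping_eqI) (simp add: lookup_emb fract_collapse)

lemma emb_sum: "emb (sum f S) = (\<Sum>i\<in>S. emb (f i))"
  by (induction S rule: infinite_finite_induct) (simp_all add: emb_add)

lemma emb_eq0: "emb p = 0 \<Longrightarrow> p = 0"
  by (rule poly_mapping_eqI) (metis lookup_emb lookup_zero eq_fract(1) fract_collapse(1) mult_1_right mult_zero_left one_neq_zero)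

lemma emb_mconst: "emb (mconst k * p) = sc (Fract k 1) (emb (p :: ('v, 'a::idom) mpoly))"
  by (rule poly_mapping_eqI) (simp add: lookup_emb sc_def mconst_def lookup_single0_mult)

lemma keys_emb: "Poly_Mapping.keys (emb p) = Poly_Mapping.keys p"
  by (auto simp: in_keys_iff lookup_emb)

lemma in_span_monos:
  fixes p :: "('m::comm_monoid_add \<Rightarrow>\<^sub>0 'f::field)"
  assumes "finite T" "Poly_Mapping.keys p \<subseteq> T"
  shows "p \<in> vs.span ((\<lambda>a. Poly_Mapping.single a 1) ` T)"
proof -
  have "p = (\<Sum>a\<in>Poly_Mapping.keys p. sc (Poly_Mapping.lookup p a) (Poly_Mapping.single a 1))"
    by (subst poly_expand) (simp add: sc_def mult_single)
  also have "\<dots> \<in> vs.span ((\<lambda>a. Poly_Mapping.single a 1) ` T)"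
    using assms by (intro vs.span_sum vs.span_scale vs.span_base) auto
  finally show ?thesis .
qed

lemma indepK:
  fixes F :: "'w::finite \<Rightarrow> ('v, 'a::idom) mpoly"
  assumes ai: "alg_indep F" and fG: "finite G"
    and Aind: "\<And>c. (\<forall>g\<in>G. c g \<in> gen_subalg F) \<Longrightarrow> (\<Sum>g\<in>G. c g * g) = 0 \<Longrightarrow> (\<forall>g\<in>G. c g = 0)"
    and fJ: "finite J" and JG: "snd ` J \<subseteq> G"
    and s0: "(\<Sum>i\<in>J. mconst (k i) * (Fpow F (fst i) * snd i)) = 0"
  shows "\<forall>i\<in>J. k i = 0"
proof -
  define Jg where "Jg g = {b. (b, g) \<in> J}" for g
  have fJg: "finite (Jg g)" for g
  proof -
    have "Jg g \<subseteq> fst ` J" by (force simp: Jg_def)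
    then show ?thesis using fJ finite_subset by blast
  qed
  define Q where "Q g = (\<Sum>b\<in>Jg g. Poly_Mapping.single b (k (b, g)))" for g
  define c where "c g = mpoly_eval mconst (Q g) F" for g
  have c_eq: "c g = (\<Sum>b\<in>Jg g. mconst (k (b, g)) * Fpow F b)" for g
    by (simp add: c_def Q_def eval_sum_singles)
  let ?h = "\<lambda>i. mconst (k i) * (Fpow F (fst i) * snd i)"
  have "(\<Sum>i\<in>J. ?h i) = (\<Sum>g\<in>G. \<Sum>i\<in>{i. i \<in> J \<and> snd i = g}. ?h i)"
    by (rule sum.group[symmetric]) (use fJ fG JG in auto)
  also have "\<dots> = (\<Sum>g\<in>G. c g * g)"
  proof (rule sum.cong[OF refl])
    fix g assume "g \<in> G"
    have e: "{i. i \<in> J \<and> snd i = g} = (\<lambda>b. (b, g)) ` Jg g" by (force simp: Jg_def)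
    have "(\<Sum>i\<in>{i. i \<in> J \<and> snd i = g}. ?h i) = (\<Sum>b\<in>Jg g. ?h (b, g))"
      unfolding e by (subst sum.reindex) (auto simp: inj_on_def)
    also have "\<dots> = c g * g" unfolding c_eq sum_distrib_right by (simp add: mult_ac)
    finally show "(\<Sum>i\<in>{i. i \<in> J \<and> snd i = g}. ?h i) = c g * g" .
  qed
  finally have "(\<Sum>g\<in>G. c g * g) = 0" using s0 by simp
  moreover have "\<forall>g\<in>G. c g \<in> gen_subalg F" by (simp add: c_def gen_subalg_def)
  ultimately have c0: "\<forall>g\<in>G. c g = 0" using Aind by blast
  show ?thesis
  proof
    fix i assume iJ: "i \<in> J"
    obtain b g where i: "i = (b, g)" by fastforce
    have gG: "g \<in> G" using JG iJ i by force
    have "Q g = 0" using ai c0 gG unfolding alg_indep_def c_def by blast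
    then have "Poly_Mapping.lookup (Q g) b = 0" by simp
    moreover have "b \<in> Jg g" using iJ i by (simp add: Jg_def)
    ultimately show "k i = 0" using i fJg by (simp add: Q_def lookup_sum_singles)
  qed
qed



lemma clear_denoms:
  fixes w :: "'i \<Rightarrow> 'a::idom fract"
  assumes "finite J"
  shows "\<exists>Bd k. Bd \<noteq> 0 \<and> (\<forall>i\<in>J. Fract (k i) 1 = Fract Bd 1 * w i)"
  using assms
proof (induction J rule: finite_induct)
  case empty then show ?case by (rule exI[of _ 1]) simp
next
  case (insert x J)
  then obtain Bd k where Bd: "Bd \<noteq> 0" "\<forall>i\<in>J. Fract (k i) 1 = Fract Bd 1 * w i" by blast
  obtain a b where ab: "w x = Fract a b" "b \<noteq> 0" by (cases "w x") auto
  define k' where "k' i = (if i = x then a * Bd else k i * b)" for i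
  have "Fract (k' i) 1 = Fract (Bd * b) 1 * w i" if "i \<in> insert x J" for i
  proof (cases "i = x")
    case True then show ?thesis using ab by (simp add: k'_def eq_fract mult_ac)
  next
    case False
    then have "i \<in> J" using that by simp
    then have "Fract (k i) 1 = Fract Bd 1 * w i" using Bd by blast
    then have "Fract (k i) 1 * Fract b 1 = Fract Bd 1 * w i * Fract b 1" by simp
    then show ?thesis using False by (simp add: k'_def mult_ac)
  qed
  moreover have "Bd * b \<noteq> 0" using Bd ab by simp
  ultimately show ?case by blast
qed

lemma count_main:
  fixes F :: "'w::finite \<Rightarrow> ('v::finite, 'a::idom) mpoly"
  assumes ai: "alg_indep F" and fG: "finite G"
    and Aind: "\<And>c. (\<forall>g\<in>G. c g \<in> gen_subalg F) \<Longrightarrow> (\<Sum>g\<in>G. c g * g) = 0 \<Longrightarrow> (\<forall>g\<in>G. c g = 0)"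
    and degG: "\<forall>g\<in>G. degle g E"
    and fB: "finite {\<beta> :: 'w \<Rightarrow>\<^sub>0 nat. (\<Sum>w\<in>UNIV. Poly_Mapping.lookup \<beta> w * mpoly_deg (F w)) \<le> D}"
    and fN: "finite {\<alpha> :: 'v \<Rightarrow>\<^sub>0 nat. mdeg \<alpha> \<le> D + E}"
  shows "card {\<beta> :: 'w \<Rightarrow>\<^sub>0 nat. (\<Sum>w\<in>UNIV. Poly_Mapping.lookup \<beta> w * mpoly_deg (F w)) \<le> D} * card G
         \<le> card {\<alpha> :: 'v \<Rightarrow>\<^sub>0 nat. mdeg \<alpha> \<le> D + E}"
proof -
  define Bs where "Bs = {\<beta> :: 'w \<Rightarrow>\<^sub>0 nat. (\<Sum>w\<in>UNIV. Poly_Mapping.lookup \<beta> w * mpoly_deg (F w)) \<le> D}"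
  define Ns where "Ns = {\<alpha> :: 'v \<Rightarrow>\<^sub>0 nat. mdeg \<alpha> \<le> D + E}"
  define Idx where "Idx = Bs \<times> G"
  define h where "h i = emb (Fpow F (fst i) * snd i)" for i
  have fIdx: "finite Idx" using fB fG by (simp add: Idx_def Bs_def)
  have IndIdx: "\<forall>i\<in>J. w i = 0" if JI: "J \<subseteq> Idx" and s0: "(\<Sum>i\<in>J. sc (w i) (h i)) = 0" for J w
  proof -
    have fJ: "finite J" using JI fIdx finite_subset by blast
    obtain Bd k where Bd: "Bd \<noteq> 0" "\<forall>i\<in>J. Fract (k i) 1 = Fract Bd 1 * w i"
      using clear_denoms[OF fJ, of w] by blast
    have "(\<Sum>i\<in>J. sc (Fract (k i) 1) (h i)) = (\<Sum>i\<in>J. sc (Fract Bd 1) (sc (w i) (h i)))"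
      using Bd by (intro sum.cong) (simp_all add: vs.scale_scale)
    also have "\<dots> = sc (Fract Bd 1) (\<Sum>i\<in>J. sc (w i) (h i))"
      by (simp add: vs.scale_sum_right)
    also have "\<dots> = 0" using s0 by simp
    finally have "(\<Sum>i\<in>J. sc (Fract (k i) 1) (h i)) = 0" .
    then have "emb (\<Sum>i\<in>J. mconst (k i) * (Fpow F (fst i) * snd i)) = 0"
      by (simp add: emb_sum emb_mconst h_def)
    then have "(\<Sum>i\<in>J. mconst (k i) * (Fpow F (fst i) * snd i)) = 0" by (rule emb_eq0)
    moreover have "snd ` J \<subseteq> G" using JI by (auto simp: Idx_def)
    ultimately have "\<forall>i\<in>J. k i = 0" using indepK[OF ai fG Aind fJ] by blast
    then show ?thesis using Bd by (metis Fract1_eq0 divisors_zero)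
  qed
  have injh: "inj_on h Idx"
  proof (rule inj_onI)
    fix i j assume ij: "i \<in> Idx" "j \<in> Idx" "h i = h j"
    show "i = j"
    proof (rule ccontr)
      assume ne: "i \<noteq> j"
      let ?w = "\<lambda>x. if x = i then 1 else - 1 :: 'a fract"
      have "(\<Sum>x\<in>{i, j}. sc (?w x) (h x)) = 0"
        using ne ij by (simp add: vs.scale_minus_left)
      then have "\<forall>x\<in>{i, j}. ?w x = 0" using IndIdx[of "{i, j}" ?w] ij by blast
      then show False by simp
    qed
  qed
  have indep: "vs.independent (h ` Idx)"
    unfolding vs.independent_explicit_finite_subsets
  proof (intro allI impI)
    fix S u assume S: "S \<subseteq> h ` Idx" "finite S" and su: "(\<Sum>v\<in>S. sc (u v) v) = 0"
    define J where "J = {i \<in> Idx. h i \<in> S}"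
    have SJ: "S = h ` J" using S by (auto simp: J_def)
    have injJ: "inj_on h J" using injh by (rule inj_on_subset) (auto simp: J_def)
    have "(\<Sum>i\<in>J. sc (u (h i)) (h i)) = 0" using su unfolding SJ sum.reindex[OF injJ] by simp
    then have "\<forall>i\<in>J. u (h i) = 0" using IndIdx[of J "\<lambda>i. u (h i)"] by (auto simp: J_def)
    then show "\<forall>v\<in>S. u v = 0" using SJ by blast
  qed
  have span: "h ` Idx \<subseteq> vs.span ((\<lambda>a. Poly_Mapping.single a 1) ` Ns)"
  proof
    fix x assume "x \<in> h ` Idx"
    then obtain b g where bg: "b \<in> Bs" "g \<in> G" "x = h (b, g)" by (auto simp: Idx_def)
    have "degle (Fpow F b * g) ((\<Sum>w\<in>UNIV. Poly_Mapping.lookup b w * mpoly_deg (F w)) + E)"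
      using degle_mult[OF degle_Fpow degG[rule_format, OF bg(2)]] .
    then have "degle (Fpow F b * g) (D + E)"
      by (rule degle_mono) (use bg(1) in \<open>simp add: Bs_def\<close>)
    then have "Poly_Mapping.keys x \<subseteq> Ns" using bg(3) by (auto simp: h_def keys_emb degle_def Ns_def)
    then show "x \<in> vs.span ((\<lambda>a. Poly_Mapping.single a 1) ` Ns)"
      using fN by (intro in_span_monos) (auto simp: Ns_def)
  qed
  have "card (h ` Idx) \<le> card ((\<lambda>a. Poly_Mapping.single a (1::'a fract)) ` Ns)"
    using vs.independent_span_bound[OF _ indep span] fN by (simp add: Ns_def)
  also have "\<dots> \<le> card Ns" by (rule card_image_le) (use fN in \<open>simp add: Ns_def\<close>)
  finally have "card Idx \<le> card Ns" using card_image[OF injh] by simp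
  then show ?thesis by (simp add: Idx_def card_cartesian_product Bs_def Ns_def mult.commute)
qed



lemma lookup_image_pm:
  "Poly_Mapping.lookup ` {\<beta> :: 'w::finite \<Rightarrow>\<^sub>0 'b::zero. Q (Poly_Mapping.lookup \<beta>)} = {f. Q f}"
proof
  show "{f. Q f} \<subseteq> Poly_Mapping.lookup ` {\<beta>. Q (Poly_Mapping.lookup \<beta>)}"
  proof
    fix f :: "'w \<Rightarrow> 'b" assume "f \<in> {f. Q f}"
    moreover have "Poly_Mapping.lookup (Abs_poly_mapping f) = f" by simp
    ultimately show "f \<in> Poly_Mapping.lookup ` {\<beta>. Q (Poly_Mapping.lookup \<beta>)}"
      by (metis (mono_tags, lifting) image_eqI mem_Collect_eq)
  qed
qed auto

lemma inj_lookup: "inj Poly_Mapping.lookup"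
  by (rule injI) (rule poly_mapping_eqI, simp)

lemma card_pm: "card {\<beta> :: 'w::finite \<Rightarrow>\<^sub>0 'b::zero. Q (Poly_Mapping.lookup \<beta>)} = card {f. Q f}"
  by (metis lookup_image_pm card_image inj_lookup inj_on_subset subset_UNIV)

lemma finite_pm: "finite {\<beta> :: 'w::finite \<Rightarrow>\<^sub>0 'b::zero. Q (Poly_Mapping.lookup \<beta>)} \<longleftrightarrow> finite {f. Q f}"
  by (metis lookup_image_pm finite_image_iff inj_lookup inj_on_subset subset_UNIV)

lemma BF_sub:
  assumes d: "\<And>w. d w \<ge> 1"
  shows "{f::'w::finite \<Rightarrow> nat. (\<Sum>w\<in>UNIV. f w * d w) \<le> D} \<subseteq> Pi\<^sub>E UNIV (\<lambda>_. {..D})"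
proof
  fix f :: "'w \<Rightarrow> nat" assume f: "f \<in> {f. (\<Sum>w\<in>UNIV. f w * d w) \<le> D}"
  have "f w \<le> D" for w
  proof -
    have "f w \<le> f w * d w" using d[of w] by simp
    also have "\<dots> \<le> (\<Sum>w\<in>UNIV. f w * d w)" by (rule member_le_sum) auto
    finally show ?thesis using f by simp
  qed
  then show "f \<in> Pi\<^sub>E UNIV (\<lambda>_. {..D})" by (simp add: PiE_UNIV_domain)
qed

lemma card_PiE_D: "card (Pi\<^sub>E (UNIV::'w::finite set) (\<lambda>_. {..D})) = (D + 1) ^ card (UNIV :: 'w set)"
  by (simp add: card_PiE)

lemma BF_finite:
  assumes d: "\<And>w. d w \<ge> 1"
  shows "finite {f::'w::finite \<Rightarrow> nat. (\<Sum>w\<in>UNIV. f w * d w) \<le> D}"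
  by (rule finite_subset[OF BF_sub[OF d]]) (simp add: finite_PiE)

lemma BF_card:
  assumes d: "\<And>w. d w \<ge> 1"
  shows "card {f::'w::finite \<Rightarrow> nat. (\<Sum>w\<in>UNIV. f w * d w) \<le> D} \<le> (D + 1) ^ card (UNIV :: 'w set)"
  using card_mono[OF _ BF_sub[OF d]] by (simp add: finite_PiE card_PiE_D)

lemma NF_finite: "finite {f::'w::finite \<Rightarrow> nat. (\<Sum>w\<in>UNIV. f w) \<le> D}"
  using BF_finite[of "\<lambda>_. 1"] by simp

lemma BF_0:
  assumes d: "\<And>w. d w \<ge> 1"
  shows "card {f::'w::finite \<Rightarrow> nat. (\<Sum>w\<in>UNIV. f w * d w) \<le> 0} \<ge> 1"
proof -
  have "(\<lambda>_. 0) \<in> {f::'w::finite \<Rightarrow> nat. (\<Sum>w\<in>UNIV. f w * d w) \<le> 0}" by simp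
  moreover have "finite {f::'w::finite \<Rightarrow> nat. (\<Sum>w\<in>UNIV. f w * d w) \<le> 0}"
    by (rule BF_finite) (rule d)
  ultimately show ?thesis
    by (metis One_nat_def Suc_leI card_gt_0_iff empty_iff)
qed

lemma NF_card:
  assumes d: "\<And>w. d w \<ge> 1"
  shows "card {f::'w::finite \<Rightarrow> nat. (\<Sum>w\<in>UNIV. f w) \<le> D}
     \<le> (\<Prod>w\<in>UNIV. d w) * card {f::'w::finite \<Rightarrow> nat. (\<Sum>w\<in>UNIV. f w * d w) \<le> D}"
proof -
  let ?B = "{f::'w::finite \<Rightarrow> nat. (\<Sum>w\<in>UNIV. f w * d w) \<le> D}"
  let ?R = "Pi\<^sub>E (UNIV::'w set) (\<lambda>w. {..<d w})"
  define \<phi> where "\<phi> f = (\<lambda>w. f w div d w, \<lambda>w. f w mod d w)" for f :: "'w \<Rightarrow> nat"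
  have inj: "inj_on \<phi> {f. (\<Sum>w\<in>UNIV. f w) \<le> D}"
  proof (rule inj_onI)
    fix f g assume "\<phi> f = \<phi> g"
    then have "f w div d w = g w div d w" "f w mod d w = g w mod d w" for w
      by (simp_all add: \<phi>_def fun_eq_iff)
    then show "f = g" by (metis div_mult_mod_eq ext)
  qed
  have sub: "\<phi> ` {f. (\<Sum>w\<in>UNIV. f w) \<le> D} \<subseteq> ?B \<times> ?R"
  proof
    fix x assume "x \<in> \<phi> ` {f. (\<Sum>w\<in>UNIV. f w) \<le> D}"
    then obtain f where f: "(\<Sum>w\<in>UNIV. f w) \<le> D" "x = \<phi> f" by blast
    have "(\<Sum>w\<in>UNIV. f w div d w * d w) \<le> (\<Sum>w\<in>UNIV. f w)"
      by (intro sum_mono) (simp add: div_times_less_eq_dividend)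
    moreover have "f w mod d w < d w" for w using d[of w] by simp
    ultimately show "x \<in> ?B \<times> ?R" using f by (simp add: \<phi>_def PiE_UNIV_domain)
  qed
  have "finite ?B" by (rule BF_finite) (rule d)
  then have fin: "finite (?B \<times> ?R)" by (simp add: finite_PiE)
  have "card {f::'w::finite \<Rightarrow> nat. (\<Sum>w\<in>UNIV. f w) \<le> D} \<le> card (?B \<times> ?R)"
    by (rule card_inj_on_le[OF inj sub fin])
  also have "\<dots> = card ?B * (\<Prod>w\<in>UNIV. d w)" by (simp add: card_cartesian_product card_PiE)
  finally show ?thesis by (simp add: mult.commute)
qed



lemma pow_over_exp_seq:
  fixes q :: real assumes q: "q > 1"
  shows "((\<lambda>k::nat. real k ^ n / q ^ k) \<longlongrightarrow> 0) sequentially"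
proof -
  define L where "L = ln q"
  have L: "L > 0" using q by (simp add: L_def)
  have lim0: "filterlim (\<lambda>k::nat. L * real k) at_top sequentially"
    by (rule filterlim_tendsto_pos_mult_at_top[OF tendsto_const L filterlim_real_sequentially])
  have lim: "filterlim (\<lambda>k::nat. real k * L) at_top sequentially"
    using lim0 by (simp add: mult.commute)
  have "((\<lambda>k::nat. (real k * L) ^ n / exp (real k * L)) \<longlongrightarrow> 0) sequentially"
    using filterlim_compose[OF tendsto_power_div_exp_0 lim] by (simp add: o_def)
  then have "((\<lambda>k::nat. (real k * L) ^ n / exp (real k * L) / L ^ n) \<longlongrightarrow> 0 / L ^ n) sequentially"
    by (intro tendsto_divide tendsto_const) (use L in auto)
  moreover have "(real k * L) ^ n / exp (real k * L) / L ^ n = real k ^ n / q ^ k" for k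
  proof -
    have "exp (real k * L) = q ^ k" using q by (simp add: L_def exp_of_nat_mult)
    then show ?thesis using L by (simp add: power_mult_distrib)
  qed
  ultimately show ?thesis by simp
qed

lemma growth:
  fixes P s E n :: nat
  assumes "P < s" "0 < P"
  shows "\<exists>k. P ^ k * (k * E + 1) ^ n < s ^ k"
proof -
  define q where "q = real s / real P"
  have q: "q > 1" using assms by (simp add: q_def)
  have "((\<lambda>k::nat. real (E + 1) ^ n * (real k ^ n / q ^ k)) \<longlongrightarrow> real (E + 1) ^ n * 0) sequentially"
    by (intro tendsto_mult tendsto_const pow_over_exp_seq q)
  then have "eventually (\<lambda>k::nat. real (E + 1) ^ n * (real k ^ n / q ^ k) < 1) sequentially"
    by (intro order_tendstoD(2)) auto
  then obtain k0 where k0: "\<And>k. k \<ge> k0 \<Longrightarrow> real (E + 1) ^ n * (real k ^ n / q ^ k) < 1"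
    unfolding eventually_sequentially by blast
  define k where "k = max k0 1"
  have k1: "k \<ge> 1" and kk0: "k \<ge> k0" by (auto simp: k_def)
  have qk: "q ^ k > 0" using q by simp
  have "real (k * E + 1) \<le> real ((E + 1) * k)" using k1 by (simp add: algebra_simps)
  then have "real (k * E + 1) ^ n \<le> real ((E + 1) * k) ^ n" by (intro power_mono) auto
  also have "\<dots> = real (E + 1) ^ n * real k ^ n" by (simp only: of_nat_mult power_mult_distrib)
  also have "\<dots> < q ^ k" using k0[OF kk0] qk by (simp add: field_simps)
  finally have "real (k * E + 1) ^ n < (real s / real P) ^ k" by (simp add: q_def)
  then have "real P ^ k * real (k * E + 1) ^ n < real P ^ k * (real s / real P) ^ k"
    using assms by (intro mult_strict_left_mono) auto
  also have "\<dots> = real s ^ k" using assms by (simp add: power_divide)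
  finally have "real (P ^ k * (k * E + 1) ^ n) < real (s ^ k)" by simp
  then show ?thesis by (intro exI[of _ k]) (simp only: of_nat_less_iff)
qed



definition indepM :: "'f::field set \<Rightarrow> 'f set \<Rightarrow> bool" where
  "indepM M S \<longleftrightarrow> (\<forall>c. (\<forall>y\<in>S. c y \<in> M) \<longrightarrow> (\<Sum>y\<in>S. c y * y) = 0 \<longrightarrow> (\<forall>y\<in>S. c y = 0))"

lemma ext_degree_le:
  fixes M T :: "'f::field set"
  assumes M0: "0 \<in> M" and M1: "1 \<in> M"
    and Mdiv: "\<And>a b. a \<in> M \<Longrightarrow> b \<in> M \<Longrightarrow> b \<noteq> 0 \<Longrightarrow> - a / b \<in> M"
    and bound: "\<And>S. finite S \<Longrightarrow> S \<subseteq> T \<Longrightarrow> indepM M S \<Longrightarrow> card S \<le> N"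
  shows "ext_degree M T \<le> enat N"
proof -
  define C where "C = card ` {S. finite S \<and> S \<subseteq> T \<and> indepM M S}"
  have "{} \<in> {S. finite S \<and> S \<subseteq> T \<and> indepM M S}" by (simp add: indepM_def)
  then have Cne: "C \<noteq> {}" by (auto simp: C_def)
  have Cfin: "finite C"
    by (rule finite_subset[of _ "{..N}"]) (auto simp: C_def intro: bound)
  obtain S where S: "finite S" "S \<subseteq> T" "indepM M S" "card S = Max C"
    using Max_in[OF Cfin Cne] by (auto simp: C_def)
  have maxS: "card S' \<le> card S" if "finite S'" "S' \<subseteq> T" "indepM M S'" for S'
    using Max_ge[OF Cfin, of "card S'"] that S(4) by (auto simp: C_def)
  have span: "T \<subseteq> span_over M S"
  proof
    fix x assume xT: "x \<in> T"
    show "x \<in> span_over M S"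
    proof (cases "x \<in> S")
      case True
      let ?c = "\<lambda>y. if y = x then 1 else 0 :: 'f"
      have "(\<Sum>y\<in>S. ?c y * y) = (\<Sum>y\<in>S. if y = x then y else 0)"
        by (rule sum.cong) auto
      also have "\<dots> = x" using True S(1) by simp
      finally have "(\<Sum>y\<in>S. ?c y * y) = x" .
      moreover have "\<forall>y\<in>S. ?c y \<in> M" using M0 M1 by auto
      ultimately show ?thesis unfolding span_over_def by (intro CollectI exI[where x = ?c]) auto
    next
      case False
      have "card (insert x S) > card S" using False S(1) by simp
      then have "\<not> indepM M (insert x S)" using maxS[of "insert x S"] S xT by force
      then obtain c where c: "\<forall>y\<in>insert x S. c y \<in> M" "(\<Sum>y\<in>insert x S. c y * y) = 0"
        and nz: "\<exists>y\<in>insert x S. c y \<noteq> 0"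
        unfolding indepM_def by blast
      have sum: "c x * x + (\<Sum>y\<in>S. c y * y) = 0" using c(2) False S(1) by simp
      have cx: "c x \<noteq> 0"
      proof
        assume "c x = 0"
        then have "(\<Sum>y\<in>S. c y * y) = 0" using sum by simp
        then have "\<forall>y\<in>S. c y = 0" using S(3) c(1) unfolding indepM_def by blast
        then show False using nz \<open>c x = 0\<close> by blast
      qed
      have "(\<Sum>y\<in>S. (- c y / c x) * y) = - (\<Sum>y\<in>S. c y * y) / c x"
        by (simp add: sum_divide_distrib sum_negf)
      also have "\<dots> = x" using sum cx by (simp add: field_simps add_eq_0_iff)
      finally have "(\<Sum>y\<in>S. (- c y / c x) * y) = x" .
      moreover have "\<forall>y\<in>S. - c y / c x \<in> M" using c(1) cx Mdiv by auto
      ultimately show ?thesis unfolding span_over_def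
        by (intro CollectI exI[where x = "\<lambda>y. - c y / c x"]) auto
    qed
  qed
  have "ext_degree M T \<le> enat (card S)"
    unfolding ext_degree_def by (rule INF_lower) (use S span in auto)
  also have "\<dots> \<le> enat N" using bound[OF S(1-3)] by simp
  finally show ?thesis .
qed



lemma deg_pos:
  fixes F :: "'w::finite \<Rightarrow> ('v::finite, 'a::idom) mpoly"
  assumes ai: "alg_indep F"
  shows "mpoly_deg (F w) \<ge> 1"
proof (rule ccontr)
  assume "\<not> mpoly_deg (F w) \<ge> 1"
  then have d0: "mpoly_deg (F w) = 0" by simp
  have keys0: "Poly_Mapping.keys (F w) \<subseteq> {0}"
  proof
    fix m assume m: "m \<in> Poly_Mapping.keys (F w)"
    then have "mdeg m \<le> 0" using degle_deg[of "F w"] d0 by (simp add: degle_def)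
    then have "Poly_Mapping.lookup m v = 0" for v by (simp add: mdeg_def)
    then have "m = 0" by (intro poly_mapping_eqI) simp
    then show "m \<in> {0}" by simp
  qed
  define c where "c = Poly_Mapping.lookup (F w) 0"
  have Fw: "F w = mconst c"
  proof (rule poly_mapping_eqI)
    fix m show "Poly_Mapping.lookup (F w) m = Poly_Mapping.lookup (mconst c) m"
      using keys0 by (cases "m = 0") (auto simp: mconst_def c_def lookup_single in_keys_iff)
  qed
  define Q :: "('w, 'a) mpoly" where
    "Q = Poly_Mapping.single (Poly_Mapping.single w 1) 1 - Poly_Mapping.single 0 c"
  have "Fpow F (Poly_Mapping.single w 1) = F w"
  proof -
    have "Fpow F (Poly_Mapping.single w 1) = (\<Prod>v\<in>UNIV. if v = w then F v else 1)"
      unfolding Fpow_def by (rule prod.cong) (auto simp: lookup_single when_def)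
    also have "\<dots> = F w" by simp
    finally show ?thesis .
  qed
  then have "mpoly_eval mconst Q F = mconst 1 * F w - mconst c * Fpow F 0"
    unfolding Q_def diff_conv_add_uminus eval_add eval_uminus eval_single by simp
  then have "mpoly_eval mconst Q F = 0" by (simp add: Fw)
  then have "Q = 0" using ai by (simp add: alg_indep_def)
  moreover have "Poly_Mapping.single w (1::nat) \<noteq> 0"
    by (metis lookup_single_eq lookup_zero one_neq_zero)
  then have "Poly_Mapping.lookup Q (Poly_Mapping.single w 1) = 1"
    by (simp add: Q_def lookup_minus lookup_single)
  ultimately show False by simp
qed

lemma poly_bound:
  fixes F :: "'v::finite \<Rightarrow> ('v, 'a::idom) mpoly"
  assumes ai: "alg_indep F" and fG: "finite G"
    and Aind: "\<And>c. (\<forall>g\<in>G. c g \<in> gen_subalg F) \<Longrightarrow> (\<Sum>g\<in>G. c g * g) = 0 \<Longrightarrow> (\<forall>g\<in>G. c g = 0)"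
  shows "card G \<le> (\<Prod>v\<in>UNIV. mpoly_deg (F v))"
proof (rule ccontr)
  define d where "d v = mpoly_deg (F v)" for v
  define P where "P = (\<Prod>v\<in>UNIV. d v)"
  define s where "s = card G"
  assume "\<not> card G \<le> (\<Prod>v\<in>UNIV. mpoly_deg (F v))"
  then have sP: "P < s" by (simp add: P_def s_def d_def)
  have d1: "\<And>v. d v \<ge> 1" using deg_pos[OF ai] by (simp add: d_def)
  then have P0: "P > 0" unfolding P_def by (metis One_nat_def Suc_le_lessD prod_pos)
  define E where "E = (\<Sum>g\<in>G. mpoly_deg g)"
  have degG: "\<forall>g\<in>G. degle g E"
  proof
    fix g assume "g \<in> G"
    then have "mpoly_deg g \<le> E" unfolding E_def by (rule member_le_sum[OF _ _ fG]) simp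
    then show "degle g E" by (rule degle_mono[OF degle_deg])
  qed
  define B where "B D = card {f::'v \<Rightarrow> nat. (\<Sum>w\<in>UNIV. f w * d w) \<le> D}" for D
  have key: "s * B D \<le> P * B (D + E)" for D
  proof -
    have fB: "finite {\<beta> :: 'v \<Rightarrow>\<^sub>0 nat. (\<Sum>w\<in>UNIV. Poly_Mapping.lookup \<beta> w * mpoly_deg (F w)) \<le> D}"
      using finite_pm[where Q = "\<lambda>f. (\<Sum>w\<in>UNIV. f w * d w) \<le> D"] BF_finite[of d D] d1
      by (simp add: d_def)
    have fNe: "finite {\<alpha> :: 'v \<Rightarrow>\<^sub>0 nat. (\<Sum>w\<in>UNIV. Poly_Mapping.lookup \<alpha> w) \<le> D + E}
        \<longleftrightarrow> finite {f :: 'v \<Rightarrow> nat. (\<Sum>w\<in>UNIV. f w) \<le> D + E}"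
      by (rule finite_pm)
    have fN: "finite {\<alpha> :: 'v \<Rightarrow>\<^sub>0 nat. mdeg \<alpha> \<le> D + E}"
      using fNe NF_finite[of "D + E"] by (simp add: mdeg_def)
    have cNe: "card {\<alpha> :: 'v \<Rightarrow>\<^sub>0 nat. (\<Sum>w\<in>UNIV. Poly_Mapping.lookup \<alpha> w) \<le> D + E}
        = card {f :: 'v \<Rightarrow> nat. (\<Sum>w\<in>UNIV. f w) \<le> D + E}"
      by (rule card_pm)
    have cBe: "card {\<beta> :: 'v \<Rightarrow>\<^sub>0 nat. (\<Sum>w\<in>UNIV. Poly_Mapping.lookup \<beta> w * d w) \<le> D}
        = card {f :: 'v \<Rightarrow> nat. (\<Sum>w\<in>UNIV. f w * d w) \<le> D}"
      by (rule card_pm)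
    have "card {\<beta> :: 'v \<Rightarrow>\<^sub>0 nat. (\<Sum>w\<in>UNIV. Poly_Mapping.lookup \<beta> w * mpoly_deg (F w)) \<le> D} * card G
         \<le> card {\<alpha> :: 'v \<Rightarrow>\<^sub>0 nat. mdeg \<alpha> \<le> D + E}"
      by (rule count_main[OF ai fG Aind degG fB fN])
    moreover have "card {\<beta> :: 'v \<Rightarrow>\<^sub>0 nat. (\<Sum>w\<in>UNIV. Poly_Mapping.lookup \<beta> w * mpoly_deg (F w)) \<le> D} = B D"
      using cBe by (simp add: B_def d_def)
    moreover have "card {\<alpha> :: 'v \<Rightarrow>\<^sub>0 nat. mdeg \<alpha> \<le> D + E} = card {f::'v \<Rightarrow> nat. (\<Sum>w\<in>UNIV. f w) \<le> D + E}"
      using cNe by (simp add: mdeg_def)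
    moreover have "card {f::'v \<Rightarrow> nat. (\<Sum>w\<in>UNIV. f w) \<le> D + E} \<le> P * B (D + E)"
      unfolding P_def B_def by (rule NF_card) (rule d1)
    ultimately show ?thesis by (simp add: s_def mult.commute)
  qed
  have pow: "s ^ k \<le> P ^ k * B (k * E)" for k
  proof (induction k)
    case 0
    have "1 \<le> B 0" unfolding B_def by (rule BF_0) (rule d1)
    then show ?case by simp
  next
    case (Suc k)
    have "s ^ Suc k = s * s ^ k" by simp
    also have "\<dots> \<le> s * (P ^ k * B (k * E))" using Suc by simp
    also have "\<dots> = P ^ k * (s * B (k * E))" by (simp add: mult_ac)
    also have "\<dots> \<le> P ^ k * (P * B (k * E + E))" using key[of "k * E"] by simp
    also have "\<dots> = P ^ Suc k * B (Suc k * E)" by (simp add: mult_ac add.commute)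
    finally show ?case .
  qed
  obtain k where k: "P ^ k * (k * E + 1) ^ card (UNIV :: 'v set) < s ^ k"
    using growth[OF sP P0] by blast
  have "B (k * E) \<le> (k * E + 1) ^ card (UNIV :: 'v set)"
    unfolding B_def by (rule BF_card) (rule d1)
  then have "s ^ k \<le> P ^ k * (k * E + 1) ^ card (UNIV :: 'v set)"
    using pow[of k] by (meson le_trans mult_le_mono2)
  then show False using k leD by blast
qed



lemma A_mult:
  fixes F :: "'w::finite \<Rightarrow> ('v, 'a::comm_ring_1) mpoly"
  shows "a \<in> gen_subalg F \<Longrightarrow> b \<in> gen_subalg F \<Longrightarrow> a * b \<in> gen_subalg F"
  unfolding gen_subalg_def by (metis (no_types, lifting) eval_mult rangeE rangeI)

lemma A_neg:
  fixes F :: "'w::finite \<Rightarrow> ('v, 'a::comm_ring_1) mpoly"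
  shows "a \<in> gen_subalg F \<Longrightarrow> - a \<in> gen_subalg F"
  unfolding gen_subalg_def by (metis (no_types, lifting) eval_uminus rangeE rangeI)

lemma A_0:
  fixes F :: "'w::finite \<Rightarrow> ('v, 'a::comm_ring_1) mpoly"
  shows "0 \<in> gen_subalg F"
  unfolding gen_subalg_def by (metis eval_zero rangeI)

lemma A_1:
  fixes F :: "'w::finite \<Rightarrow> ('v, 'a::comm_ring_1) mpoly"
  shows "1 \<in> gen_subalg F"
  unfolding gen_subalg_def by (metis eval_one rangeI)

lemma Fract_add1: "Fract (a + b) 1 = Fract a 1 + Fract (b::'a::idom) 1"
  by simp

lemma Fract_sum: "Fract (sum f I) 1 = (\<Sum>i\<in>I. Fract (f i :: 'a::idom) 1)"
  by (induction I rule: infinite_finite_induct) (simp_all add: fract_collapse Fract_add1)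

lemma Fract1_in: "a \<in> A \<Longrightarrow> 1 \<in> A \<Longrightarrow> Fract a 1 \<in> frac_of A"
  unfolding frac_of_def by (intro CollectI exI[of _ a] exI[of _ 1]) simp

lemma frac_bound:
  fixes F :: "'v::{finite,linorder} \<Rightarrow> ('v, 'a::idom) mpoly"
  assumes ai: "alg_indep F" and fS: "finite S" and ind: "indepM (frac_of (gen_subalg F)) S"
  shows "card S \<le> (\<Prod>v\<in>UNIV. mpoly_deg (F v))"
proof -
  have "\<forall>y::('v, 'a) mpoly fract. \<exists>p::('v, 'a) mpoly \<times> ('v, 'a) mpoly. snd p \<noteq> 0 \<and> y = Fract (fst p) (snd p)" by (metis Fract_cases fst_conv snd_conv)
  from choice[OF this] obtain p :: "('v, 'a) mpoly fract \<Rightarrow> ('v, 'a) mpoly \<times> ('v, 'a) mpoly" where p0: "\<forall>y. snd (p y) \<noteq> 0 \<and> y = Fract (fst (p y)) (snd (p y))" by blast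
  have p: "snd (p y) \<noteq> 0 \<and> y = Fract (fst (p y)) (snd (p y))" for y :: "('v, 'a) mpoly fract" using p0 by blast
  define a where "a y = fst (p y)" for y
  define b where "b y = snd (p y)" for y
  have ab: "b y \<noteq> 0" "y = Fract (a y) (b y)" for y using p[of y] by (auto simp: a_def b_def)
  define Dn where "Dn = (\<Prod>y\<in>S. b y)"
  have Dn0: "Dn \<noteq> 0" using ab(1) fS by (simp add: Dn_def)
  define g where "g y = a y * (\<Prod>z\<in>S - {y}. b z)" for y
  have gy: "Fract (g y) 1 = y * Fract Dn 1" if "y \<in> S" for y
  proof -
    define R where "R = (\<Prod>z\<in>S - {y}. b z)"
    define u where "u = a y"
    define v where "v = b y"
    have yuv: "y = Fract u v" and v0: "v \<noteq> 0" using ab[of y] by (simp_all add: u_def v_def)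
    have DnR: "Dn = v * R" using that fS by (simp add: Dn_def R_def v_def prod.remove)
    have gu: "g y = u * R" by (simp add: g_def u_def R_def)
    have "y * Fract Dn 1 = Fract u v * Fract (v * R) 1" by (simp only: yuv DnR)
    also have "\<dots> = Fract (u * R) 1" using v0 by (simp add: eq_fract mult_ac)
    finally show ?thesis by (simp add: gu)
  qed
  have injg: "inj_on g S"
  proof (rule inj_onI)
    fix x y assume xy: "x \<in> S" "y \<in> S" "g x = g y"
    then have "x * Fract Dn 1 = y * Fract Dn 1" using gy by metis
    then show "x = y" using Dn0 by simp
  qed
  define G where "G = g ` S"
  have cG: "card G = card S" using card_image[OF injg] by (simp add: G_def)
  have fG: "finite G" using fS by (simp add: G_def)
  have Aind: "\<forall>h\<in>G. c h = 0" if cA: "\<forall>h\<in>G. c h \<in> gen_subalg F" and s0: "(\<Sum>h\<in>G. c h * h) = 0" for c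
  proof -
    have "(\<Sum>y\<in>S. c (g y) * g y) = 0" using s0 unfolding G_def sum.reindex[OF injg] by simp
    then have "Fract (\<Sum>y\<in>S. c (g y) * g y) 1 = 0" by (simp add: fract_collapse)
    then have "(\<Sum>y\<in>S. Fract (c (g y)) 1 * Fract (g y) 1) = 0" by (simp add: Fract_sum)
    moreover have "(\<Sum>y\<in>S. Fract (c (g y)) 1 * Fract (g y) 1) = (\<Sum>y\<in>S. Fract (c (g y)) 1 * y) * Fract Dn 1"
      unfolding sum_distrib_right by (rule sum.cong) (simp_all add: gy mult.assoc)
    ultimately have "(\<Sum>y\<in>S. Fract (c (g y)) 1 * y) = 0" using Dn0 by simp
    moreover have "\<forall>y\<in>S. Fract (c (g y)) 1 \<in> frac_of (gen_subalg F)"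
      using cA A_1 by (auto simp: G_def intro!: Fract1_in)
    ultimately have "\<forall>y\<in>S. Fract (c (g y)) 1 = 0"
      using ind[unfolded indepM_def, THEN spec[where x = "\<lambda>y. Fract (c (g y)) 1"]] by blast
    then show ?thesis by (auto simp: G_def)
  qed
  have "card G \<le> (\<Prod>v\<in>UNIV. mpoly_deg (F v))"
    by (rule poly_bound[OF ai fG]) (use Aind in blast)
  then show ?thesis using cG by simp
qed

theorem mainTheorem4:
  fixes F :: "'v::{finite,linorder} \<Rightarrow> ('v, 'a::idom) mpoly"
  assumes "alg_indep F"
  shows "sep_degree (frac_of (gen_subalg F)) (frac_of UNIV) \<le> enat (\<Prod>v\<in>UNIV. mpoly_deg (F v))"
  unfolding sep_degree_def
proof (rule ext_degree_le)
  let ?A = "gen_subalg F"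
  show "0 \<in> frac_of ?A"
    using Fract1_in[OF A_0 A_1, of F] by (simp add: fract_collapse)
  show "1 \<in> frac_of ?A"
    using Fract1_in[OF A_1 A_1, of F] by (simp add: fract_collapse)
  show "- x / y \<in> frac_of ?A" if xM: "x \<in> frac_of ?A" and yM: "y \<in> frac_of ?A" and y0: "y \<noteq> 0" for x y
  proof -
    obtain a1 a2 where x: "x = Fract a1 a2" "a1 \<in> ?A" "a2 \<in> ?A" "a2 \<noteq> 0"
      using xM unfolding frac_of_def by blast
    obtain b1 b2 where y: "y = Fract b1 b2" "b1 \<in> ?A" "b2 \<in> ?A" "b2 \<noteq> 0"
      using yM unfolding frac_of_def by blast
    have b1: "b1 \<noteq> 0" using y y0 by (auto simp: fract_collapse)
    have "- x / y = Fract (- a1 * b2) (a2 * b1)" using x y b1 by simp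
    moreover have "- a1 * b2 \<in> ?A" using x y by (intro A_mult A_neg)
    moreover have "a2 * b1 \<in> ?A" using x y by (intro A_mult)
    moreover have "a2 * b1 \<noteq> 0" using x b1 by simp
    ultimately show ?thesis unfolding frac_of_def by blast
  qed
  show "card S \<le> (\<Prod>v\<in>UNIV. mpoly_deg (F v))"
    if "finite S" "S \<subseteq> sep_closure (frac_of ?A) (frac_of UNIV)" "indepM (frac_of ?A) S" for S
    by (rule frac_bound[OF assms that(1) that(3)])
qed

end
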